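(* On torsionfree bornological \(V\)-modules, the assignment \(M\mapsto M'\) is right adjoint to the inclusion of the full subcategory of nuclear, torsionfree bornological \(V\)-modules into the category of torsionfree bornological \(V\)-modules (with bounded \(V\)-linear maps as morphisms). That is, for every torsionfree bornological \(V\)-module \(N\), \(N'\) is a nuclear torsionfree bornological \(V\)-module, and for every nuclear torsionfree bornological \(V\)-module \(M\), a \(V\)-linear map \(M\to N\) is bounded if and only if it is bounded as a map \(M\to N'\).
   Context: Let \(V\) be a complete discrete valuation ring with uniformiser \(\pi\) and fraction field \(F\). A bornology on a set is a collection of subsets (called bounded) containing all finite subsets and closed under finite unions and under taking subsets. A bornological \(V\)-module is a \(V\)-module with a bornology such that every bounded subset is contained in a bounded \(V\)-submodule; a \(V\)-linear map is bounded if it maps bounded subsets to bounded subsets. \(M\) is torsionfree if it is torsionfree as a \(V\)-module and \(\pi^{-1}S=\{x:\pi x\in S\}\) is bounded for every bounded \(S\). A subset \(S\subseteq M\) is compactoid if there is a bounded \(V\)-submodule \(T\subseteq M\) with \(S\subseteq T\) such that for every \(n\in\mathbb N\) there is a finite set \(F_n\subseteq T\) with \(S\subseteq VF_n+\pi^nT\). \(M'\) denotes \(M\) with the bornology of compactoid subsets; \(M\) is nuclear if every bounded subset of \(M\) is compactoid. *)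

theory Defs
  imports Complex_Main
begin

definition dvr_uniformiser :: "'v::idom \<Rightarrow> bool" where
  "dvr_uniformiser \<pi> \<longleftrightarrow> \<pi> \<noteq> 0 \<and> \<not> \<pi> dvd 1 \<and>
     (\<forall>x. x \<noteq> 0 \<longrightarrow> (\<exists>u n. u dvd 1 \<and> x = u * \<pi> ^ n))"

definition pi_adically_complete :: "'v::idom \<Rightarrow> bool" where
  "pi_adically_complete \<pi> \<longleftrightarrow>
     (\<forall>x :: nat \<Rightarrow> 'v. (\<forall>n. \<pi> ^ n dvd x (Suc n) - x n) \<longrightarrow>
        (\<exists>y. \<forall>n. \<pi> ^ n dvd y - x n))"

definition complete_dvr :: "'v::idom \<Rightarrow> bool" where
  "complete_dvr \<pi> \<longleftrightarrow> dvr_uniformiser \<pi> \<and> pi_adically_complete \<pi>"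

definition submodule :: "('v::comm_ring_1 \<Rightarrow> 'm::ab_group_add \<Rightarrow> 'm) \<Rightarrow> 'm set \<Rightarrow> bool" where
  "submodule scale S \<longleftrightarrow> 0 \<in> S \<and> (\<forall>x\<in>S. \<forall>y\<in>S. x + y \<in> S) \<and> (\<forall>c. \<forall>x\<in>S. scale c x \<in> S)"

definition gen_submodule :: "('v::comm_ring_1 \<Rightarrow> 'm::ab_group_add \<Rightarrow> 'm) \<Rightarrow> 'm set \<Rightarrow> 'm set" where
  "gen_submodule scale F = {(\<Sum>a\<in>t. scale (r a) a) | t r. finite t \<and> t \<subseteq> F}"

definition bornology :: "'m set set \<Rightarrow> bool" where
  "bornology B \<longleftrightarrow> (\<forall>S. finite S \<longrightarrow> S \<in> B) \<and>
     (\<forall>S T. S \<in> B \<longrightarrow> T \<in> B \<longrightarrow> S \<union> T \<in> B) \<and>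
     (\<forall>S T. S \<in> B \<longrightarrow> T \<subseteq> S \<longrightarrow> T \<in> B)"

definition born_module :: "('v::comm_ring_1 \<Rightarrow> 'm::ab_group_add \<Rightarrow> 'm) \<Rightarrow> 'm set set \<Rightarrow> bool" where
  "born_module scale B \<longleftrightarrow> module scale \<and> bornology B \<and>
     (\<forall>S\<in>B. \<exists>T\<in>B. S \<subseteq> T \<and> submodule scale T)"

definition bounded_map :: "'m set set \<Rightarrow> 'n set set \<Rightarrow> ('m \<Rightarrow> 'n) \<Rightarrow> bool" where
  "bounded_map B B' f \<longleftrightarrow> (\<forall>S\<in>B. f ` S \<in> B')"

definition torsionfree_born ::
    "('v::comm_ring_1 \<Rightarrow> 'm::ab_group_add \<Rightarrow> 'm) \<Rightarrow> 'v \<Rightarrow> 'm set set \<Rightarrow> bool" where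
  "torsionfree_born scale \<pi> B \<longleftrightarrow>
     (\<forall>a x. a \<noteq> 0 \<longrightarrow> scale a x = 0 \<longrightarrow> x = 0) \<and>
     (\<forall>S\<in>B. {x. scale \<pi> x \<in> S} \<in> B)"

definition compactoid ::
    "('v::comm_ring_1 \<Rightarrow> 'm::ab_group_add \<Rightarrow> 'm) \<Rightarrow> 'v \<Rightarrow> 'm set set \<Rightarrow> 'm set \<Rightarrow> bool" where
  "compactoid scale \<pi> B S \<longleftrightarrow>
     (\<exists>T. T \<in> B \<and> submodule scale T \<and> S \<subseteq> T \<and>
        (\<forall>n::nat. \<exists>F. finite F \<and> F \<subseteq> T \<and>
           S \<subseteq> {x + y | x y. x \<in> gen_submodule scale F \<and> y \<in> scale (\<pi> ^ n) ` T}))"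

definition compactoid_born ::
    "('v::comm_ring_1 \<Rightarrow> 'm::ab_group_add \<Rightarrow> 'm) \<Rightarrow> 'v \<Rightarrow> 'm set set \<Rightarrow> 'm set set" where
  "compactoid_born scale \<pi> B = {S. compactoid scale \<pi> B S}"

definition nuclear ::
    "('v::comm_ring_1 \<Rightarrow> 'm::ab_group_add \<Rightarrow> 'm) \<Rightarrow> 'v \<Rightarrow> 'm set set \<Rightarrow> bool" where
  "nuclear scale \<pi> B \<longleftrightarrow> (\<forall>S\<in>B. compactoid scale \<pi> B S)"

end

theory Submission
  imports Defs
begin


lemma dvr_principal:
  fixes \<pi> :: "'v::idom"
  assumes "dvr_uniformiser \<pi>" "(0::'v) \<in> I"
  shows "\<exists>d\<in>I. \<forall>c\<in>I. d dvd c"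
proof (cases "I \<subseteq> {0}")
  case True then show ?thesis using assms(2) by (intro bexI[of _ 0]) auto
next
  case False
  then obtain c0 where c0: "c0 \<in> I" "c0 \<noteq> 0" by auto
  have unitrep: "\<And>x. x \<noteq> 0 \<Longrightarrow> \<exists>u n. u dvd 1 \<and> x = u * \<pi> ^ n"
    using assms(1) unfolding dvr_uniformiser_def by blast
  define P where "P = (\<lambda>n. \<exists>u. u dvd 1 \<and> u * \<pi> ^ n \<in> I)"
  have "\<exists>n. P n" using unitrep[OF c0(2)] c0(1) unfolding P_def by metis
  then have Pm: "P (LEAST n. P n)" by (rule LeastI_ex)
  then obtain u where u: "u dvd 1" "u * \<pi> ^ (LEAST n. P n) \<in> I" unfolding P_def by blast
  show ?thesis
  proof (intro bexI[OF _ u(2)] ballI)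
    fix c assume c: "c \<in> I"
    show "u * \<pi> ^ (LEAST n. P n) dvd c"
    proof (cases "c = 0")
      case False
      then obtain w k where wk: "w dvd 1" "c = w * \<pi> ^ k" using unitrep by blast
      have "P k" unfolding P_def using wk c by blast
      then have "(LEAST n. P n) \<le> k" by (rule Least_le)
      then have "\<pi> ^ (LEAST n. P n) dvd \<pi> ^ k" by (rule le_imp_power_dvd)
      moreover have "u dvd w" using u(1) by (meson dvd_trans one_dvd)
      ultimately show ?thesis using wk(2) by (simp add: mult_dvd_mono)
    qed simp
  qed
qed

lemma fg_lemma:
  fixes \<pi> :: "'v::idom" and scale :: "'v \<Rightarrow> 'm::ab_group_add \<Rightarrow> 'm"
  assumes M: "module scale" and V: "dvr_uniformiser \<pi>" and F: "finite F"
  shows "module.subspace scale H \<Longrightarrow> \<exists>F'. finite F' \<and> F' \<subseteq> H \<inter> module.span scale F \<and>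
            H \<inter> module.span scale F \<subseteq> module.span scale F'"
  using F
proof (induction F arbitrary: H rule: finite_induct)
  case empty
  interpret module scale by (rule M)
  show ?case by (intro exI[of _ "{}"]) auto
next
  case (insert a F)
  interpret module scale by (rule M)
  define I where "I = {c. \<exists>h\<in>H \<inter> span (insert a F). h - scale c a \<in> span F}"
  have "0 \<in> I" unfolding I_def
    by (rule CollectI, rule bexI[of _ 0]) (simp_all add: span_zero subspace_0[OF insert.prems])
  from dvr_principal[OF V this] obtain d where d: "d \<in> I" "\<And>c. c \<in> I \<Longrightarrow> d dvd c"
    by blast
  from d(1) obtain h0 where h0: "h0 \<in> H" "h0 \<in> span (insert a F)" "h0 - scale d a \<in> span F"
    unfolding I_def by blast
  from insert.IH[OF insert.prems] obtain F0 where F0: "finite F0" "F0 \<subseteq> H \<inter> span F" "H \<inter> span F \<subseteq> span F0"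
    by blast
  show ?case
  proof (intro exI[of _ "insert h0 F0"] conjI)
    show "finite (insert h0 F0)" using F0 by simp
    show "insert h0 F0 \<subseteq> H \<inter> span (insert a F)"
      using h0(1,2) F0(2) span_mono[of F "insert a F"] by blast
    show "H \<inter> span (insert a F) \<subseteq> span (insert h0 F0)"
    proof
      fix h assume h: "h \<in> H \<inter> span (insert a F)"
      then obtain c where c: "h - scale c a \<in> span F" using h span_breakdown_eq[of h a F] by blast
      then have "c \<in> I" unfolding I_def using h by blast
      then have "d dvd c" by (rule d(2))
      then obtain e where e: "c = d * e" by (elim dvdE)
      have eq: "h - scale e h0 = (h - scale c a) - scale e (h0 - scale d a)"
        by (simp add: e scale_right_diff_distrib mult.commute[of d e])
      have "h - scale e h0 \<in> span F"
        unfolding eq by (intro span_diff span_scale c h0(3))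
      moreover have "h - scale e h0 \<in> H"
        using h h0(1) by (intro subspace_diff[OF insert.prems] subspace_scale[OF insert.prems]) auto
      ultimately have "h - scale e h0 \<in> span F0" using F0(3) by blast
      then have "h - scale e h0 \<in> span (insert h0 F0)"
        using span_mono[of F0 "insert h0 F0"] by blast
      moreover have "scale e h0 \<in> span (insert h0 F0)" by (intro span_scale span_base) simp
      ultimately have "(h - scale e h0) + scale e h0 \<in> span (insert h0 F0)" by (rule span_add)
      then show "h \<in> span (insert h0 F0)" by simp
    qed
  qed
qed

lemma div_lemma:
  fixes \<pi> :: "'v::idom" and scale :: "'v \<Rightarrow> 'm::ab_group_add \<Rightarrow> 'm"
  assumes M: "module scale" and V: "dvr_uniformiser \<pi>" and F: "finite F"
    and tf: "\<forall>a x. a \<noteq> 0 \<longrightarrow> scale a x = 0 \<longrightarrow> x = 0" and c: "c \<noteq> 0"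
    and W: "module.subspace scale W"
  shows "\<exists>D. finite D \<and> D \<subseteq> W \<and> (\<forall>y\<in>W. scale c y \<in> module.span scale F \<longrightarrow> y \<in> module.span scale D)"
proof -
  interpret module scale by (rule M)
  have hom: "module_hom scale scale (scale c)" by simp
  have "subspace (scale c ` W)" using module_hom.subspace_image[OF hom W] .
  from fg_lemma[OF M V F this] obtain F0 where F0: "finite F0" "F0 \<subseteq> scale c ` W \<inter> span F" "scale c ` W \<inter> span F \<subseteq> span F0"
    by blast
  define g where "g = (\<lambda>f. SOME y. y \<in> W \<and> scale c y = f)"
  have g: "g f \<in> W \<and> scale c (g f) = f" if "f \<in> F0" for f
  proof -
    from that F0(2) obtain y where "y \<in> W" "scale c y = f" by blast
    then have "y \<in> W \<and> scale c y = f" by blast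
    then show ?thesis unfolding g_def by (rule someI[where P="\<lambda>y. y \<in> W \<and> scale c y = f"])
  qed
  have img: "scale c ` (g ` F0) = F0"
  proof
    show "scale c ` g ` F0 \<subseteq> F0" using g by (auto simp: image_image)
    show "F0 \<subseteq> scale c ` g ` F0"
    proof
      fix f assume "f \<in> F0"
      then have "f = scale c (g f)" using g by simp
      then show "f \<in> scale c ` g ` F0" using \<open>f \<in> F0\<close> by blast
    qed
  qed
  show ?thesis
  proof (intro exI[of _ "g ` F0"] conjI ballI impI)
    show "finite (g ` F0)" using F0 by simp
    show "g ` F0 \<subseteq> W" using g by auto
    fix y assume y: "y \<in> W" "scale c y \<in> span F"
    then have "scale c y \<in> span F0" using F0(3) by blast
    also have "span F0 = scale c ` span (g ` F0)"
      using module_hom.span_image[OF hom, of "g ` F0"] img by simp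
    finally obtain z where z: "z \<in> span (g ` F0)" "scale c y = scale c z" by blast
    then have "scale c (y - z) = 0" by (simp add: scale_right_diff_distrib)
    then have "y - z = 0" using tf c by blast
    then have "y = z" by simp
    then show "y \<in> span (g ` F0)" using z by simp
  qed
qed

lemma subspace_sumset:
  assumes M: "module scale" and A: "module.subspace scale A" and B: "module.subspace scale B"
  shows "module.subspace scale {x + y | x y. x \<in> A \<and> y \<in> B}"
proof -
  interpret module scale by (rule M)
  show ?thesis
  proof (rule subspaceI)
    show "0 \<in> {x + y | x y. x \<in> A \<and> y \<in> B}" using A B by (auto intro!: exI[of _ 0] subspace_0)
  next
    fix u v assume "u \<in> {x + y | x y. x \<in> A \<and> y \<in> B}" "v \<in> {x + y | x y. x \<in> A \<and> y \<in> B}"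
    then obtain x1 y1 x2 y2 where "u = x1 + y1" "v = x2 + y2" "x1 \<in> A" "y1 \<in> B" "x2 \<in> A" "y2 \<in> B" by blast
    then show "u + v \<in> {x + y | x y. x \<in> A \<and> y \<in> B}"
      by (intro CollectI exI[of _ "x1 + x2"] exI[of _ "y1 + y2"]) (auto simp: add.assoc add.left_commute intro: subspace_add[OF A] subspace_add[OF B])
  next
    fix c u assume "u \<in> {x + y | x y. x \<in> A \<and> y \<in> B}"
    then obtain x1 y1 where "u = x1 + y1" "x1 \<in> A" "y1 \<in> B" by blast
    then show "scale c u \<in> {x + y | x y. x \<in> A \<and> y \<in> B}"
      by (intro CollectI exI[of _ "scale c x1"] exI[of _ "scale c y1"]) (auto simp: scale_right_distrib intro: subspace_scale[OF A] subspace_scale[OF B])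
  qed
qed



definition msum :: "'m::ab_group_add set \<Rightarrow> 'm set \<Rightarrow> 'm set" where
  "msum A B = {x + y | x y. x \<in> A \<and> y \<in> B}"

lemma mem_msum: "z \<in> msum A B \<longleftrightarrow> (\<exists>x\<in>A. \<exists>y\<in>B. z = x + y)"
  unfolding msum_def by blast

lemma comp_iff:
  assumes "module scale"
  shows "compactoid scale \<pi> B S \<longleftrightarrow> (\<exists>T. T \<in> B \<and> module.subspace scale T \<and> S \<subseteq> T \<and>
     (\<forall>n::nat. \<exists>F. finite F \<and> F \<subseteq> T \<and> S \<subseteq> msum (module.span scale F) (scale (\<pi> ^ n) ` T)))"
proof -
  have 1: "submodule scale = module.subspace scale"
    using assms by (auto simp: fun_eq_iff submodule_def module.subspace_def)
  have 2: "gen_submodule scale = module.span scale"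
    using assms by (auto simp: fun_eq_iff gen_submodule_def module.span_explicit)
  show ?thesis unfolding compactoid_def 1 2 msum_def by blast
qed

lemma born_iff:
  "born_module scale B \<longleftrightarrow> module scale \<and> bornology B \<and>
     (\<forall>S\<in>B. \<exists>T\<in>B. S \<subseteq> T \<and> module.subspace scale T)"
proof -
  have "module scale \<Longrightarrow> submodule scale = module.subspace scale"
    by (auto simp: fun_eq_iff submodule_def module.subspace_def)
  then show ?thesis unfolding born_module_def by metis
qed

lemma msum_subspace:
  assumes M: "module scale" and A: "module.subspace scale A" and T: "module.subspace scale T"
  shows "module.subspace scale (msum A (scale c ` T))"
proof -
  interpret module scale by (rule M)
  have "subspace (scale c ` T)"
    using module_hom.subspace_image[OF module_hom_scale_self T] .
  then show ?thesis unfolding msum_def using subspace_sumset[OF M A] by blast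
qed

lemma P1:
  assumes N: "born_module scaleN BN"
  shows "born_module scaleN (compactoid_born scaleN \<pi> BN)"
proof -
  have M: "module scaleN" and BB: "bornology BN"
    and BS: "\<forall>S\<in>BN. \<exists>T\<in>BN. S \<subseteq> T \<and> module.subspace scaleN T"
    using N unfolding born_iff by auto
  interpret module scaleN by (rule M)
  note ci = comp_iff[OF M]
  have fin: "compactoid scaleN \<pi> BN S" if "finite S" for S
  proof -
    have "S \<in> BN" using BB that unfolding bornology_def by blast
    then obtain T where T: "T \<in> BN" "S \<subseteq> T" "subspace T" using BS by blast
    have "S \<subseteq> msum (span S) (scaleN (\<pi> ^ n) ` T)" for n
    proof
      fix x assume "x \<in> S"
      then show "x \<in> msum (span S) (scaleN (\<pi> ^ n) ` T)"
        unfolding mem_msum using subspace_0[OF T(3)]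
        by (intro bexI[of _ x] bexI[of _ 0]) (auto intro: span_base image_eqI[of _ _ 0])
    qed
    then show ?thesis unfolding ci using T that by blast
  qed
  have un: "compactoid scaleN \<pi> BN (S1 \<union> S2)"
    if hS: "compactoid scaleN \<pi> BN S1" "compactoid scaleN \<pi> BN S2" for S1 S2
  proof -
    obtain T1 where T1: "T1 \<in> BN" "subspace T1" "S1 \<subseteq> T1"
      "\<forall>n. \<exists>F. finite F \<and> F \<subseteq> T1 \<and> S1 \<subseteq> msum (span F) (scaleN (\<pi> ^ n) ` T1)"
      using hS(1) unfolding ci by blast
    obtain T2 where T2: "T2 \<in> BN" "subspace T2" "S2 \<subseteq> T2"
      "\<forall>n. \<exists>F. finite F \<and> F \<subseteq> T2 \<and> S2 \<subseteq> msum (span F) (scaleN (\<pi> ^ n) ` T2)"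
      using hS(2) unfolding ci by blast
    have "T1 \<union> T2 \<in> BN" using BB T1 T2 unfolding bornology_def by blast
    then obtain T where T: "T \<in> BN" "T1 \<union> T2 \<subseteq> T" "subspace T" using BS by blast
    show ?thesis unfolding ci
    proof (rule exI[of _ T], intro conjI allI T(1,3))
      show "S1 \<union> S2 \<subseteq> T" using T T1 T2 by blast
      fix n
      obtain F1 where F1: "finite F1" "F1 \<subseteq> T1" "S1 \<subseteq> msum (span F1) (scaleN (\<pi> ^ n) ` T1)"
        using T1(4) by blast
      obtain F2 where F2: "finite F2" "F2 \<subseteq> T2" "S2 \<subseteq> msum (span F2) (scaleN (\<pi> ^ n) ` T2)"
        using T2(4) by blast
      have "msum (span F1) (scaleN (\<pi> ^ n) ` T1) \<subseteq> msum (span (F1 \<union> F2)) (scaleN (\<pi> ^ n) ` T)"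
        using span_mono[of F1 "F1 \<union> F2"] T(2) unfolding msum_def by blast
      moreover have "msum (span F2) (scaleN (\<pi> ^ n) ` T2) \<subseteq> msum (span (F1 \<union> F2)) (scaleN (\<pi> ^ n) ` T)"
        using span_mono[of F2 "F1 \<union> F2"] T(2) unfolding msum_def by blast
      ultimately show "\<exists>F. finite F \<and> F \<subseteq> T \<and> S1 \<union> S2 \<subseteq> msum (span F) (scaleN (\<pi> ^ n) ` T)"
        using F1 F2 T(2) by (intro exI[of _ "F1 \<union> F2"]) blast
    qed
  qed
  have sub: "compactoid scaleN \<pi> BN S2" if "compactoid scaleN \<pi> BN S1" "S2 \<subseteq> S1" for S1 S2
    using that unfolding ci by (meson order_trans)
  have hull: "compactoid scaleN \<pi> BN (span S)" if hS: "compactoid scaleN \<pi> BN S" for S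
  proof -
    obtain T where T: "T \<in> BN" "subspace T" "S \<subseteq> T"
      "\<forall>n. \<exists>F. finite F \<and> F \<subseteq> T \<and> S \<subseteq> msum (span F) (scaleN (\<pi> ^ n) ` T)"
      using hS unfolding ci by blast
    show ?thesis unfolding ci
    proof (rule exI[of _ T], intro conjI allI T(1,2))
      show "span S \<subseteq> T" using span_minimal T by blast
      fix n
      obtain F where F: "finite F" "F \<subseteq> T" "S \<subseteq> msum (span F) (scaleN (\<pi> ^ n) ` T)"
        using T(4) by blast
      have "span S \<subseteq> msum (span F) (scaleN (\<pi> ^ n) ` T)"
        using span_minimal[OF F(3) msum_subspace[OF M subspace_span T(2)]] .
      then show "\<exists>F. finite F \<and> F \<subseteq> T \<and> span S \<subseteq> msum (span F) (scaleN (\<pi> ^ n) ` T)"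
        using F by blast
    qed
  qed
  have "\<exists>T. compactoid scaleN \<pi> BN T \<and> S \<subseteq> T \<and> subspace T" if "compactoid scaleN \<pi> BN S" for S
    using hull[OF that] span_superset[of S] subspace_span[of S] by blast
  then show ?thesis unfolding born_iff compactoid_born_def bornology_def
    using M fin un sub by auto
qed



lemma P2:
  fixes \<pi> :: "'v::idom"
  assumes N: "born_module scaleN BN" and tf: "torsionfree_born scaleN \<pi> BN"
    and V: "dvr_uniformiser \<pi>"
  shows "torsionfree_born scaleN \<pi> (compactoid_born scaleN \<pi> BN)"
proof -
  have M: "module scaleN" and BB: "bornology BN"
    using N unfolding born_iff by auto
  interpret module scaleN by (rule M)
  note ci = comp_iff[OF M]
  have tf1: "\<forall>a x. a \<noteq> 0 \<longrightarrow> scaleN a x = 0 \<longrightarrow> x = 0"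
    and tf2: "\<forall>S\<in>BN. {x. scaleN \<pi> x \<in> S} \<in> BN"
    using tf unfolding torsionfree_born_def by auto
  have pi0: "\<pi> \<noteq> 0" using V unfolding dvr_uniformiser_def by simp
  have "compactoid scaleN \<pi> BN {x. scaleN \<pi> x \<in> S}" if hS: "compactoid scaleN \<pi> BN S" for S
  proof -
    obtain T where T: "T \<in> BN" "subspace T" "S \<subseteq> T"
      "\<forall>n. \<exists>F. finite F \<and> F \<subseteq> T \<and> S \<subseteq> msum (span F) (scaleN (\<pi> ^ n) ` T)"
      using hS unfolding ci by blast
    define T' where "T' = {x. scaleN \<pi> x \<in> T}"
    have T'B: "T' \<in> BN" using tf2 T(1) unfolding T'_def by blast
    have T'sub: "subspace T'" unfolding T'_def
      using module_hom.subspace_linear_preimage[OF module_hom_scale_self T(2)] .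
    have TT': "T \<subseteq> T'" unfolding T'_def using subspace_scale[OF T(2)] by blast
    show ?thesis unfolding ci
    proof (rule exI[of _ T'], intro conjI allI T'B T'sub)
      show "{x. scaleN \<pi> x \<in> S} \<subseteq> T'" using T(3) unfolding T'_def by blast
      fix n
      obtain F where F: "finite F" "F \<subseteq> T" "S \<subseteq> msum (span F) (scaleN (\<pi> ^ Suc n) ` T)"
        using T(4) by blast
      obtain D where D: "finite D" "D \<subseteq> T'"
        "\<forall>y\<in>T'. scaleN \<pi> y \<in> span F \<longrightarrow> y \<in> span D"
        using div_lemma[OF M V F(1) tf1 pi0 T'sub] by blast
      have "{x. scaleN \<pi> x \<in> S} \<subseteq> msum (span D) (scaleN (\<pi> ^ n) ` T')"
      proof
        fix x assume "x \<in> {x. scaleN \<pi> x \<in> S}"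
        then have xS: "scaleN \<pi> x \<in> S" by simp
        then have "scaleN \<pi> x \<in> msum (span F) (scaleN (\<pi> ^ Suc n) ` T)" using F(3) by blast
        then obtain g t where gt: "g \<in> span F" "t \<in> T" "scaleN \<pi> x = g + scaleN (\<pi> ^ Suc n) t"
          unfolding mem_msum by blast
        define y where "y = x - scaleN (\<pi> ^ n) t"
        have "x \<in> T'" using xS T(3) unfolding T'_def by blast
        moreover have "scaleN (\<pi> ^ n) t \<in> T'" using TT' gt(2) subspace_scale[OF T'sub] by blast
        ultimately have yT: "y \<in> T'" unfolding y_def by (rule subspace_diff[OF T'sub])
        have "scaleN \<pi> y = g" unfolding y_def using gt(3)
          by (simp add: scale_right_diff_distrib)
        then have "y \<in> span D" using D(3) yT gt(1) by blast
        moreover have "x = y + scaleN (\<pi> ^ n) t" unfolding y_def by simp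
        ultimately show "x \<in> msum (span D) (scaleN (\<pi> ^ n) ` T')"
          unfolding mem_msum using TT' gt(2) by blast
      qed
      then show "\<exists>F. finite F \<and> F \<subseteq> T' \<and> {x. scaleN \<pi> x \<in> S} \<subseteq> msum (span F) (scaleN (\<pi> ^ n) ` T')"
        using D by blast
    qed
  qed
  then show ?thesis unfolding torsionfree_born_def compactoid_born_def using tf1 by blast
qed

lemma P4:
  fixes \<pi> :: "'v::idom"
  assumes N: "born_module scaleN BN"
    and Mb: "born_module scaleM BM" and nuc: "nuclear scaleM \<pi> BM"
    and f: "module_hom scaleM scaleN f"
  shows "bounded_map BM BN f \<longleftrightarrow> bounded_map BM (compactoid_born scaleN \<pi> BN) f"
proof -
  have MN: "module scaleN" and BB: "bornology BN"
    using N unfolding born_iff by auto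
  have MM: "module scaleM" using Mb unfolding born_iff by auto
  interpret f: module_hom scaleM scaleN f by (rule f)
  note ciN = comp_iff[OF MN] and ciM = comp_iff[OF MM]
  show ?thesis
  proof
    assume bd: "bounded_map BM BN f"
    show "bounded_map BM (compactoid_born scaleN \<pi> BN) f"
      unfolding bounded_map_def compactoid_born_def
    proof (intro ballI CollectI)
      fix S assume S: "S \<in> BM"
      then have "compactoid scaleM \<pi> BM S" using nuc unfolding nuclear_def by blast
      then obtain T where T: "T \<in> BM" "f.m1.subspace T" "S \<subseteq> T"
        "\<forall>n. \<exists>F. finite F \<and> F \<subseteq> T \<and> S \<subseteq> msum (f.m1.span F) (scaleM (\<pi> ^ n) ` T)"
        unfolding ciM by blast
      show "compactoid scaleN \<pi> BN (f ` S)" unfolding ciN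
      proof (rule exI[of _ "f ` T"], intro conjI allI)
        show "f ` T \<in> BN" using bd T(1) unfolding bounded_map_def by blast
        show "f.m2.subspace (f ` T)" using f.subspace_image[OF T(2)] .
        show "f ` S \<subseteq> f ` T" using T(3) by blast
        fix n
        obtain F where F: "finite F" "F \<subseteq> T" "S \<subseteq> msum (f.m1.span F) (scaleM (\<pi> ^ n) ` T)"
          using T(4) by blast
        have "f ` S \<subseteq> msum (f.m2.span (f ` F)) (scaleN (\<pi> ^ n) ` f ` T)"
        proof
          fix z assume "z \<in> f ` S"
          then obtain s where s: "s \<in> S" "z = f s" by blast
          then have "s \<in> msum (f.m1.span F) (scaleM (\<pi> ^ n) ` T)" using F(3) by blast
          then obtain x t where xt: "x \<in> f.m1.span F" "t \<in> T" "s = x + scaleM (\<pi> ^ n) t"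
            unfolding mem_msum by blast
          have "z = f x + scaleN (\<pi> ^ n) (f t)" using s xt by (simp add: f.add f.scale)
          moreover have "f x \<in> f.m2.span (f ` F)" using xt(1) unfolding f.span_image by (rule imageI)
          ultimately show "z \<in> msum (f.m2.span (f ` F)) (scaleN (\<pi> ^ n) ` f ` T)"
            unfolding mem_msum using xt(2) by blast
        qed
        then show "\<exists>F'. finite F' \<and> F' \<subseteq> f ` T \<and> f ` S \<subseteq> msum (f.m2.span F') (scaleN (\<pi> ^ n) ` f ` T)"
          using F by blast
      qed
    qed
  next
    assume bd: "bounded_map BM (compactoid_born scaleN \<pi> BN) f"
    show "bounded_map BM BN f" unfolding bounded_map_def
    proof
      fix S assume "S \<in> BM"
      then have "compactoid scaleN \<pi> BN (f ` S)" using bd unfolding bounded_map_def compactoid_born_def by blast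
      then obtain T where "T \<in> BN" "f ` S \<subseteq> T" unfolding ciN by blast
      then show "f ` S \<in> BN" using BB unfolding bornology_def by blast
    qed
  qed
qed



lemma P3:
  fixes \<pi> :: "'v::idom"
  assumes N: "born_module scaleN BN" and tf: "torsionfree_born scaleN \<pi> BN"
    and V: "dvr_uniformiser \<pi>"
  shows "nuclear scaleN \<pi> (compactoid_born scaleN \<pi> BN)"
  unfolding nuclear_def
proof
  fix S assume "S \<in> compactoid_born scaleN \<pi> BN"
  then have hS: "compactoid scaleN \<pi> BN S" unfolding compactoid_born_def by simp
  have M: "module scaleN" and BB: "bornology BN"
    using N unfolding born_iff by auto
  interpret module scaleN by (rule M)
  note ci = comp_iff[OF M]
  have tf1: "\<forall>a x. a \<noteq> 0 \<longrightarrow> scaleN a x = 0 \<longrightarrow> x = 0"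
    using tf unfolding torsionfree_born_def by auto
  have pi0: "\<pi> \<noteq> 0" using V unfolding dvr_uniformiser_def by simp
  obtain T where T: "T \<in> BN" "subspace T" "S \<subseteq> T"
      "\<forall>n. \<exists>F. finite F \<and> F \<subseteq> T \<and> S \<subseteq> msum (span F) (scaleN (\<pi> ^ n) ` T)"
    using hS unfolding ci by blast
  obtain F where F: "\<And>n. finite (F n)" "\<And>n. F n \<subseteq> T" "\<And>n. S \<subseteq> msum (span (F n)) (scaleN (\<pi> ^ n) ` T)"
    using T(4) by metis
  have "\<forall>n k. \<exists>D. finite D \<and> D \<subseteq> T \<and>
     (\<forall>y\<in>T. scaleN (\<pi> ^ n) y \<in> span (F (n + k) \<union> F (2 * n)) \<longrightarrow> y \<in> span D)"
  proof (intro allI)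
    fix n k
    have fin: "finite (F (n + k) \<union> F (2 * n))" using F(1) by simp
    have pn: "\<pi> ^ n \<noteq> 0" using pi0 by simp
    show "\<exists>D. finite D \<and> D \<subseteq> T \<and>
     (\<forall>y\<in>T. scaleN (\<pi> ^ n) y \<in> span (F (n + k) \<union> F (2 * n)) \<longrightarrow> y \<in> span D)"
      by (rule div_lemma[OF M V fin tf1 pn T(2)])
  qed
  then obtain D where D: "\<And>n k. finite (D n k)" "\<And>n k. D n k \<subseteq> T"
    "\<And>n k y. y \<in> T \<Longrightarrow> scaleN (\<pi> ^ n) y \<in> span (F (n + k) \<union> F (2 * n)) \<Longrightarrow> y \<in> span (D n k)"
    by metis
  define E where "E k = F k \<union> (\<Union>n\<in>{..<k}. D n k)" for k
  have Efin: "finite (E k)" for k unfolding E_def using F(1) D(1) by simp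
  have ET: "E k \<subseteq> T" for k unfolding E_def using F(2) D(2) by blast
  define T' where "T' = T \<inter> (\<Inter>k. msum (span (E k)) (scaleN (\<pi> ^ k) ` T))"
  have T'sub: "subspace T'" unfolding T'_def
    by (intro subspace_inter T(2) subspace_Int msum_subspace[OF M subspace_span T(2)])
  have T'T: "T' \<subseteq> T" unfolding T'_def by blast
  have T'k: "T' \<subseteq> msum (span (E k)) (scaleN (\<pi> ^ k) ` T)" for k unfolding T'_def by blast
  have T'B: "T' \<in> BN" using T(1) T'T BB unfolding bornology_def by blast
  have T'C: "compactoid scaleN \<pi> BN T'" unfolding ci
  proof (rule exI[of _ T], intro conjI allI T(1,2) T'T)
    fix k show "\<exists>F. finite F \<and> F \<subseteq> T \<and> T' \<subseteq> msum (span F) (scaleN (\<pi> ^ k) ` T)"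
      by (rule exI[of _ "E k"]) (intro conjI Efin ET T'k)
  qed
  have ST': "S \<subseteq> T'"
  proof -
    have "S \<subseteq> msum (span (E k)) (scaleN (\<pi> ^ k) ` T)" for k
      using F(3)[of k] span_mono[of "F k" "E k"] unfolding E_def msum_def by blast
    then show ?thesis unfolding T'_def using T(3) by blast
  qed
  show "compactoid scaleN \<pi> (compactoid_born scaleN \<pi> BN) S" unfolding ci
  proof (rule exI[of _ T'], intro conjI allI T'sub ST')
    show "T' \<in> compactoid_born scaleN \<pi> BN" using T'C unfolding compactoid_born_def by simp
    fix n
    obtain F' where F': "finite F'" "F' \<subseteq> T' \<inter> span (F (2 * n))" "T' \<inter> span (F (2 * n)) \<subseteq> span F'"
      using fg_lemma[OF M V F(1)[of "2 * n"] T'sub] by (elim exE conjE) blast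
    have "S \<subseteq> msum (span F') (scaleN (\<pi> ^ n) ` T')"
    proof
      fix s assume sS: "s \<in> S"
      then have "s \<in> msum (span (F (2 * n))) (scaleN (\<pi> ^ (2 * n)) ` T)" using F(3) by blast
      then obtain g u where gu: "g \<in> span (F (2 * n))" "u \<in> T" "s = g + scaleN (\<pi> ^ (2 * n)) u"
        unfolding mem_msum by blast
      define t where "t = scaleN (\<pi> ^ n) u"
      have st: "s = g + scaleN (\<pi> ^ n) t" unfolding t_def gu(3)
        by (simp add: mult_2 power_add)
      have tT: "t \<in> T" unfolding t_def using gu(2) T(2) by (rule subspace_scale[rotated 1])
      have "t \<in> msum (span (E k)) (scaleN (\<pi> ^ k) ` T)" for k
      proof (cases "k \<le> n")
        case True
        have "t = 0 + scaleN (\<pi> ^ k) (scaleN (\<pi> ^ (n - k)) u)"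
          unfolding t_def using True by (simp add: power_add[symmetric])
        moreover have "scaleN (\<pi> ^ (n - k)) u \<in> T" using gu(2) T(2) by (rule subspace_scale[rotated 1])
        ultimately show ?thesis unfolding mem_msum using span_zero by blast
      next
        case False
        then have nk: "n \<in> {..<k}" by simp
        have "s \<in> msum (span (F (n + k))) (scaleN (\<pi> ^ (n + k)) ` T)" using F(3) sS by blast
        then obtain e t1 where et: "e \<in> span (F (n + k))" "t1 \<in> T" "s = e + scaleN (\<pi> ^ (n + k)) t1"
          unfolding mem_msum by blast
        define y where "y = t - scaleN (\<pi> ^ k) t1"
        have yT: "y \<in> T" unfolding y_def using tT T(2) et(2) by (intro subspace_diff subspace_scale)
        have "scaleN (\<pi> ^ n) y = e - g"
        proof -
          have "scaleN (\<pi> ^ n) y = scaleN (\<pi> ^ n) t - scaleN (\<pi> ^ (n + k)) t1"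
            unfolding y_def by (simp add: scale_right_diff_distrib power_add)
          also have "\<dots> = e - g" using st et(3) by (simp add: algebra_simps)
          finally show ?thesis .
        qed
        moreover have "e - g \<in> span (F (n + k) \<union> F (2 * n))"
          using et(1) gu(1) span_mono[of "F (n + k)" "F (n + k) \<union> F (2 * n)"]
            span_mono[of "F (2 * n)" "F (n + k) \<union> F (2 * n)"] by (blast intro: span_diff)
        ultimately have "y \<in> span (D n k)" using D(3) yT by metis
        moreover have "span (D n k) \<subseteq> span (E k)" using nk unfolding E_def by (intro span_mono) blast
        moreover have "t = y + scaleN (\<pi> ^ k) t1" unfolding y_def by simp
        ultimately show ?thesis unfolding mem_msum using et(2) by blast
      qed
      then have tT': "t \<in> T'" unfolding T'_def using tT by blast
      have "g = s - scaleN (\<pi> ^ n) t" using st by simp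
      moreover have "s - scaleN (\<pi> ^ n) t \<in> T'" using sS ST' tT' T'sub by (intro subspace_diff subspace_scale) auto
      ultimately have "g \<in> span F'" using F'(3) gu(1) by blast
      then show "s \<in> msum (span F') (scaleN (\<pi> ^ n) ` T')" unfolding mem_msum using st tT' by blast
    qed
    then show "\<exists>F. finite F \<and> F \<subseteq> T' \<and> S \<subseteq> msum (span F) (scaleN (\<pi> ^ n) ` T')"
      using F' by blast
  qed
qed


theorem lemma4p3:
  fixes \<pi> :: "'v::idom"
    and scaleN :: "'v \<Rightarrow> 'n::ab_group_add \<Rightarrow> 'n" and BN :: "'n set set"
  assumes V: "complete_dvr \<pi>"
    and N: "born_module scaleN BN" "torsionfree_born scaleN \<pi> BN"
  shows "born_module scaleN (compactoid_born scaleN \<pi> BN)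
       \<and> torsionfree_born scaleN \<pi> (compactoid_born scaleN \<pi> BN)
       \<and> nuclear scaleN \<pi> (compactoid_born scaleN \<pi> BN)
       \<and> (\<forall>(scaleM :: 'v \<Rightarrow> 'm::ab_group_add \<Rightarrow> 'm) BM (f :: 'm \<Rightarrow> 'n).
            born_module scaleM BM \<longrightarrow> torsionfree_born scaleM \<pi> BM \<longrightarrow> nuclear scaleM \<pi> BM \<longrightarrow>
            module_hom scaleM scaleN f \<longrightarrow>
            (bounded_map BM BN f \<longleftrightarrow> bounded_map BM (compactoid_born scaleN \<pi> BN) f))"
proof -
  have V': "dvr_uniformiser \<pi>" using V unfolding complete_dvr_def by blast
  show ?thesis
    using P1[OF N(1)] P2[OF N V'] P3[OF N V'] P4[OF N(1)] by blast
qed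

end
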